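(* Let $k\ge2$ and $t\ge1$ be integers. Let $K$ be the number of inner blocks of $0$s of length at least two in the binary expansion of $t$, and $L$ the number of maximal blocks of $1$s of length $\le k$ in the binary expansion of $t$. Then \[m(t)\ge 4+K+\max\Bigl(0,\Bigl\lfloor\frac{L-2K-1}{2}\Bigr\rfloor\Bigr)\frac{k}{2^k}.\] In particular, for all integers $D_0\ge2$ and $k\ge2$ there exists a bound $B=B(D_0,k)$ such that for all integers $t\ge1$ with $D(t)\le D_0$, the number of inner blocks of $0$s of length $\ge2$ in $t$ and the number of maximal blocks of $1$s of length $\le k$ in $t$ are both bounded by $B$.
   Context: $s(n)$ is the number of $1$s in the binary expansion of $n\ge0$; $\delta(j,t)=\lim_{N\to\infty}\frac1N|\{0\le n<N: s(n+t)-s(n)=j\}|$ for $j\in\mathbb Z$, a probability distribution on $\mathbb Z$, and $\kappa_j(t)$ denotes its $j$-th cumulant ($\log\sum_k\delta(k,t)e^{2\pi ik\vartheta}=\sum_{j\ge0}\frac{\kappa_j(t)}{j!}(2\pi i\vartheta)^j$ near $\vartheta=0$). Set $D(t)=\kappa_2(t)-\kappa_3(t)/3$ and $m(t)=\min(D(t),D(t+1))$. A maximal block of $1$s is a maximal run of consecutive binary digits equal to $1$; its length is the number of digits. An inner block of $0$s is a maximal run of consecutive binary digits equal to $0$ that is bordered by a digit $1$ on both sides (so trailing zeros at the least significant end are not inner blocks). *)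

theory Defs
  imports "HOL-Analysis.Analysis"
begin

fun bsum :: "nat \<Rightarrow> nat" where
  "bsum n = (if n = 0 then 0 else n mod 2 + bsum (n div 2))"

declare bsum.simps[simp del]

definition delta :: "int \<Rightarrow> nat \<Rightarrow> real" where
  "delta j t = lim (\<lambda>N::nat. real (card {n \<in> {..<N}. int (bsum (n + t)) - int (bsum n) = j}) / real N)"

definition charf :: "nat \<Rightarrow> complex \<Rightarrow> complex" where
  "charf t \<theta> = infsum (\<lambda>k::int. complex_of_real (delta k t) * exp (2 * of_real pi * \<i> * of_int k * \<theta>)) UNIV"

text \<open>j-th cumulant: log charf t theta = sum_j kappa_j/j! (2 pi i theta)^j near 0,
  i.e. kappa_j = (d/dtheta)^j log charf t (0) / (2 pi i)^j.\<close>
definition cumulant :: "nat \<Rightarrow> nat \<Rightarrow> real" where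
  "cumulant j t = Re (((deriv ^^ j) (\<lambda>\<theta>. Ln (charf t \<theta>)) 0) / (2 * of_real pi * \<i>) ^ j)"

definition Dfun :: "nat \<Rightarrow> real" where
  "Dfun t = cumulant 2 t - cumulant 3 t / 3"

definition mfun :: "nat \<Rightarrow> real" where
  "mfun t = min (Dfun t) (Dfun (t + 1))"

text \<open>Maximal blocks of 1s, as pairs (a,b) of digit positions a..b (LSB = position 0).\<close>
definition one_blocks :: "nat \<Rightarrow> (nat \<times> nat) set" where
  "one_blocks t = {(a, b). a \<le> b \<and> (\<forall>i\<in>{a..b}. bit t i) \<and> (a = 0 \<or> \<not> bit t (a - 1)) \<and> \<not> bit t (Suc b)}"

definition inner_zero_blocks :: "nat \<Rightarrow> (nat \<times> nat) set" where
  "inner_zero_blocks t = {(a, b). 0 < a \<and> a \<le> b \<and> (\<forall>i\<in>{a..b}. \<not> bit t i) \<and> bit t (a - 1) \<and> bit t (Suc b)}"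

definition Kcount :: "nat \<Rightarrow> nat" where
  "Kcount t = card {(a, b) \<in> inner_zero_blocks t. b - a + 1 \<ge> 2}"

definition Lcount :: "nat \<Rightarrow> nat \<Rightarrow> nat" where
  "Lcount k t = card {(a, b) \<in> one_blocks t. b - a + 1 \<le> k}"

end

theory Submission
  imports Defs "HOL-Complex_Analysis.Complex_Analysis"
begin


definition cnt :: "nat \<Rightarrow> int \<Rightarrow> nat \<Rightarrow> nat" where
  "cnt N j t = card {n \<in> {..<N}. int (bsum (n + t)) - int (bsum n) = j}"

lemma bsum_0[simp]: "bsum 0 = 0" by (simp add: bsum.simps)
lemma bsum_even[simp]: "bsum (2*m) = bsum m"
  by (subst bsum.simps) auto
lemma bsum_odd[simp]: "bsum (Suc (2*m)) = Suc (bsum m)"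
  by (subst bsum.simps) auto

lemma card_split_parity:
  "card {n \<in> {..<N}. P n} = card {m \<in> {..<(N+1) div 2}. P (2*m)} + card {m \<in> {..<N div 2}. P (Suc (2*m))}"
proof (induction N)
  case 0 then show ?case by simp
next
  case (Suc N)
  have c1: "card {n \<in> {..<Suc N}. P n} = card {n \<in> {..<N}. P n} + (if P N then 1 else 0)"
  proof (cases "P N")
    case True
    then have "{n \<in> {..<Suc N}. P n} = insert N {n \<in> {..<N}. P n}" by auto
    then show ?thesis using True by simp
  next
    case False
    then have "{n \<in> {..<Suc N}. P n} = {n \<in> {..<N}. P n}" using less_Suc_eq by auto
    then show ?thesis using False by simp
  qed
  show ?case
  proof (cases "even N")
    case True
    then obtain M where M: "N = 2*M" by auto
    have a: "(Suc N + 1) div 2 = Suc M" "(N+1) div 2 = M" "Suc N div 2 = M" "N div 2 = M" using M by auto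
    have "card {m \<in> {..<Suc M}. P (2*m)} = card {m \<in> {..<M}. P (2*m)} + (if P N then 1 else 0)"
    proof (cases "P N")
      case True
      then have "{m \<in> {..<Suc M}. P (2*m)} = insert M {m \<in> {..<M}. P (2*m)}" using M by auto
      then show ?thesis using True by simp
    next
      case False
      then have "{m \<in> {..<Suc M}. P (2*m)} = {m \<in> {..<M}. P (2*m)}" using M less_Suc_eq by auto
      then show ?thesis using False by simp
    qed
    then show ?thesis using Suc.IH c1 a by simp
  next
    case False
    define M where "M = N div 2"
    have M: "N = Suc (2*M)" using False unfolding M_def by presburger
    have a: "(Suc N + 1) div 2 = Suc M" "(N+1) div 2 = Suc M" "Suc N div 2 = Suc M" "N div 2 = M" using M by auto
    have "card {m \<in> {..<Suc M}. P (Suc (2*m))} = card {m \<in> {..<M}. P (Suc (2*m))} + (if P N then 1 else 0)"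
    proof (cases "P N")
      case True
      then have "{m \<in> {..<Suc M}. P (Suc (2*m))} = insert M {m \<in> {..<M}. P (Suc (2*m))}" using M by auto
      then show ?thesis using True by simp
    next
      case False
      then have "{m \<in> {..<Suc M}. P (Suc (2*m))} = {m \<in> {..<M}. P (Suc (2*m))}" using M less_Suc_eq by auto
      then show ?thesis using False by simp
    qed
    then show ?thesis using Suc.IH c1 a by simp
  qed
qed

lemma bsum_e2: "bsum (2*m + 2*u) = bsum (m+u)"
  by (metis bsum_even add_mult_distrib2)
lemma bsum_e3: "bsum (Suc (2*m) + 2*u) = Suc (bsum (m+u))"
  by (metis bsum_odd add_mult_distrib2 add_Suc)
lemma bsum_e4: "bsum (2*m + Suc (2*u)) = Suc (bsum (m+u))"
  by (metis bsum_odd add_mult_distrib2 add_Suc_right)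
lemma bsum_e5: "bsum (Suc (2*m) + Suc (2*u)) = bsum (m + Suc u)"
proof -
  have "Suc (2*m) + Suc (2*u) = 2*(m + Suc u)" by simp
  then show ?thesis by (metis bsum_even)
qed

lemma cnt_even: "cnt N j (2*u) = cnt ((N+1) div 2) j u + cnt (N div 2) j u"
  unfolding cnt_def by (subst card_split_parity) (simp only: bsum_e2 bsum_e3 bsum_even bsum_odd, simp)

lemma cnt_odd: "cnt N j (Suc (2*u)) = cnt ((N+1) div 2) (j-1) u + cnt (N div 2) (j+1) (Suc u)"
proof -
  have a: "\<And>m. (int (Suc (bsum (m + u))) - int (bsum m) = j) = (int (bsum (m + u)) - int (bsum m) = j - 1)" by auto
  have b: "\<And>m. (int (bsum (m + Suc u)) - int (Suc (bsum m)) = j) = (int (bsum (m + Suc u)) - int (bsum m) = j + 1)" by auto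
  show ?thesis
    unfolding cnt_def by (subst card_split_parity) (simp only: bsum_e4 bsum_e5 bsum_even bsum_odd a b)
qed

lemma ratio_half:
  fixes g :: "nat \<Rightarrow> nat"
  assumes "\<And>N. 2*g N \<le> N+1" "\<And>N. N \<le> 2*g N + 1"
  shows "(\<lambda>N. real (g N) / real N) \<longlonglongrightarrow> 1/2"
proof (rule tendsto_sandwich[of "\<lambda>N. 1/2 - (1/2)*(1/real N)" _ _ "\<lambda>N. 1/2 + (1/2)*(1/real N)"])
  show "\<forall>\<^sub>F N in sequentially. 1/2 - (1/2)*(1/real N) \<le> real (g N) / real N"
    using eventually_gt_at_top[of 0]
  proof (rule eventually_mono)
    fix N :: nat assume "0 < N"
    moreover have "real N \<le> 2 * real (g N) + 1" using assms(2)[of N] by linarith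
    moreover have "real (g N) / real N - (1/2 - (1/2)*(1/real N)) = (2*real (g N) + 1 - real N)/(2*real N)"
      using \<open>0 < N\<close> by (simp add: field_simps)
    ultimately show "1/2 - (1/2)*(1/real N) \<le> real (g N) / real N"
      by (smt (verit) divide_nonneg_pos of_nat_0_less_iff)
  qed
  show "\<forall>\<^sub>F N in sequentially. real (g N) / real N \<le> 1/2 + (1/2)*(1/real N)"
    using eventually_gt_at_top[of 0]
  proof (rule eventually_mono)
    fix N :: nat assume "0 < N"
    moreover have "2 * real (g N) \<le> real N + 1" using assms(1)[of N] by linarith
    moreover have "1/2 + (1/2)*(1/real N) - real (g N) / real N = (real N + 1 - 2*real (g N))/(2*real N)"
      using \<open>0 < N\<close> by (simp add: field_simps)
    ultimately show "real (g N) / real N \<le> 1/2 + (1/2)*(1/real N)"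
      by (smt (verit) divide_nonneg_pos of_nat_0_less_iff)
  qed
next
  show "(\<lambda>N. 1/2 - (1/2)*(1/real N)) \<longlonglongrightarrow> 1/2"
    using tendsto_diff[OF tendsto_const tendsto_mult[OF tendsto_const lim_1_over_n], of "1/2" "1/2"] by simp
  show "(\<lambda>N. 1/2 + (1/2)*(1/real N)) \<longlonglongrightarrow> 1/2"
    using tendsto_add[OF tendsto_const tendsto_mult[OF tendsto_const lim_1_over_n], of "1/2" "1/2"] by simp
qed

lemma half_lim_gen:
  fixes g :: "nat \<Rightarrow> nat"
  assumes "(\<lambda>N. real (a N) / real N) \<longlonglongrightarrow> L"
    and g1: "\<And>N. 2*g N \<le> N+1" and g2: "\<And>N. N \<le> 2*g N + 1"
  shows "(\<lambda>N. real (a (g N)) / real N) \<longlonglongrightarrow> L/2"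
proof -
  have fl: "filterlim g at_top at_top"
    unfolding filterlim_at_top
  proof
    fix Z :: nat
    show "\<forall>\<^sub>F N in sequentially. Z \<le> g N"
      using eventually_ge_at_top[of "2*Z+1"]
    proof (rule eventually_mono)
      fix N assume "2*Z+1 \<le> N" then show "Z \<le> g N" using g2[of N] by linarith
    qed
  qed
  have "(\<lambda>N. real (a (g N)) / real (g N) * (real (g N) / real N)) \<longlonglongrightarrow> L * (1/2)"
    by (intro tendsto_mult ratio_half g1 g2 filterlim_compose[OF assms(1) fl, unfolded o_def])
  moreover have "\<forall>\<^sub>F N in sequentially. real (a (g N)) / real (g N) * (real (g N) / real N) = real (a (g N)) / real N"
    using eventually_ge_at_top[of 2]
  proof (rule eventually_mono)
    fix N :: nat assume "2 \<le> N"
    then have "g N > 0" using g2[of N] by (cases "g N") auto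
    then show "real (a (g N)) / real (g N) * (real (g N) / real N) = real (a (g N)) / real N" by simp
  qed
  ultimately have "(\<lambda>N. real (a (g N)) / real N) \<longlonglongrightarrow> L * (1/2)" by (rule Lim_transform_eventually)
  then show ?thesis by simp
qed

lemma conv_split:
  assumes "(\<lambda>N. real (a N) / real N) \<longlonglongrightarrow> L1" "(\<lambda>N. real (b N) / real N) \<longlonglongrightarrow> L2"
  shows "(\<lambda>N. real (a ((N+1) div 2) + b (N div 2)) / real N) \<longlonglongrightarrow> L1/2 + L2/2"
proof -
  have "(\<lambda>N. real (a ((N+1) div 2)) / real N + real (b (N div 2)) / real N) \<longlonglongrightarrow> L1/2 + L2/2"
    by (intro tendsto_add half_lim_gen assms) auto
  then show ?thesis by (simp add: add_divide_distrib)
qed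

lemma cnt0: "cnt N j 0 = (if j = 0 then N else 0)"
  unfolding cnt_def by auto

lemma conv0: "(\<lambda>N. real (cnt N j 0) / real N) \<longlonglongrightarrow> (if j = 0 then 1 else 0)"
proof -
  have "\<forall>\<^sub>F N in sequentially. (if j = 0 then 1 else 0) = real (cnt N j 0) / real N"
    using eventually_gt_at_top[of 0] by (rule eventually_mono) (simp add: cnt0)
  then show ?thesis by (rule Lim_transform_eventually[OF tendsto_const])
qed

lemma cnt1_big: "j > 1 \<Longrightarrow> cnt N j 1 = 0"
proof (induction N arbitrary: j rule: less_induct)
  case (less N)
  have "cnt N j 1 = cnt ((N+1) div 2) (j-1) 0 + cnt (N div 2) (j+1) 1"
    using cnt_odd[of N j 0] by simp
  moreover have "cnt ((N+1) div 2) (j-1) 0 = 0" using less.prems by (simp add: cnt0)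
  moreover have "cnt (N div 2) (j+1) 1 = 0"
  proof (cases "N = 0")
    case True then show ?thesis by (simp add: cnt_def)
  next
    case False then show ?thesis using less by simp
  qed
  ultimately show ?case by simp
qed

lemma cnt1_big': "j > 1 \<Longrightarrow> cnt N j (Suc 0) = 0"
  using cnt1_big by simp

lemma conv1: "(\<lambda>N. real (cnt N j 1) / real N) \<longlonglongrightarrow> (if j \<le> 1 then (1/2) ^ (nat (2 - j)) else 0)"
proof (cases "j > 1")
  case True
  then have z: "\<And>N. cnt N j 1 = 0" using cnt1_big by blast
  show ?thesis unfolding z using True by simp
next
  case False
  define m where "m = nat (1 - j)"
  have "j = 1 - int m" using False m_def by simp
  then show ?thesis
  proof (induction m arbitrary: j)
    case 0
    have "(\<lambda>N. real (cnt ((N+1) div 2) 0 0 + cnt (N div 2) 2 1) / real N) \<longlonglongrightarrow> 1/2 + 0/2"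
      by (rule conv_split[OF conv0[of 0, simplified]]) (simp add: cnt1_big')
    moreover have "\<And>N. cnt N 1 1 = cnt ((N+1) div 2) 0 0 + cnt (N div 2) 2 1"
      using cnt_odd[of _ 1 0] by simp
    ultimately show ?case using 0 by simp
  next
    case (Suc m)
    have e: "\<And>N. cnt N j 1 = cnt ((N+1) div 2) (j - 1) 0 + cnt (N div 2) (j+1) 1"
      using cnt_odd[of _ j 0] by simp
    have "(\<lambda>N. real (cnt ((N+1) div 2) (j - 1) 0 + cnt (N div 2) (j+1) 1) / real N) \<longlonglongrightarrow> 0/2 + ((1/2) ^ (nat (2 - (j+1))))/2"
      using conv_split[OF conv0[of "j-1"] Suc.IH[of "j+1"]] Suc.prems by simp
    moreover have "((1/2::real) ^ (nat (2 - (j+1))))/2 = (1/2) ^ (nat (2 - j))"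
    proof -
      have "nat (2 - (j+1)) = Suc m" "nat (2 - j) = Suc (Suc m)" using Suc.prems by auto
      then show ?thesis by simp
    qed
    ultimately show ?case using e Suc.prems by simp
  qed
qed

lemma cnt_conv: "\<forall>j. convergent (\<lambda>N. real (cnt N j t) / real N)"
proof (induction t rule: less_induct)
  case (less t)
  show ?case
  proof (cases "t \<le> 1")
    case True
    then consider "t = 0" | "t = 1" by linarith
    then show ?thesis using conv0 conv1 unfolding convergent_def by metis
  next
    case False
    obtain u d where ud: "t = 2*u + d" "d < 2" by (metis div_mult_mod_eq mod_less_divisor zero_less_numeral mult.commute)
    have u: "u \<ge> 1" using False ud by linarith
    show ?thesis
    proof (cases "d = 0")
      case True
      then have t: "t = 2*u" using ud by simp
      have "u < t" using t u by simp
      show ?thesis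
      proof
        fix j
        obtain L where L: "(\<lambda>N. real (cnt N j u) / real N) \<longlonglongrightarrow> L"
          using less.IH[OF \<open>u < t\<close>] unfolding convergent_def by blast
        show "convergent (\<lambda>N. real (cnt N j t) / real N)"
          unfolding convergent_def t cnt_even using conv_split[OF L L] by blast
      qed
    next
      case False
      then have t: "t = Suc (2*u)" using ud by simp
      have "u < t" "Suc u < t" using t u by simp_all
      show ?thesis
      proof
        fix j
        obtain L1 where L1: "(\<lambda>N. real (cnt N (j-1) u) / real N) \<longlonglongrightarrow> L1"
          using less.IH[OF \<open>u < t\<close>] unfolding convergent_def by blast
        obtain L2 where L2: "(\<lambda>N. real (cnt N (j+1) (Suc u)) / real N) \<longlonglongrightarrow> L2"
          using less.IH[OF \<open>Suc u < t\<close>] unfolding convergent_def by blast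
        show "convergent (\<lambda>N. real (cnt N j t) / real N)"
          unfolding convergent_def t cnt_odd using conv_split[OF L1 L2] by blast
      qed
    qed
  qed
qed

lemma delta_conv: "(\<lambda>N. real (cnt N j t) / real N) \<longlonglongrightarrow> delta j t"
  using cnt_conv[of t] unfolding delta_def cnt_def[symmetric] by (simp add: convergent_LIMSEQ_iff)

lemma delta0: "delta j 0 = (if j = 0 then 1 else 0)"
  using LIMSEQ_unique[OF delta_conv conv0] .

lemma delta1: "delta j 1 = (if j \<le> 1 then (1/2) ^ (nat (2 - j)) else 0)"
  using LIMSEQ_unique[OF delta_conv conv1] .

lemma delta_even: "delta j (2*u) = delta j u"
proof -
  have "(\<lambda>N. real (cnt N j (2*u)) / real N) \<longlonglongrightarrow> delta j u / 2 + delta j u / 2"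
    unfolding cnt_even by (rule conv_split[OF delta_conv delta_conv])
  then show ?thesis using LIMSEQ_unique[OF delta_conv] by simp
qed

lemma delta_odd: "delta j (Suc (2*u)) = delta (j-1) u / 2 + delta (j+1) (Suc u) / 2"
proof -
  have "(\<lambda>N. real (cnt N j (Suc (2*u))) / real N) \<longlonglongrightarrow> delta (j-1) u / 2 + delta (j+1) (Suc u) / 2"
    unfolding cnt_odd by (rule conv_split[OF delta_conv delta_conv])
  then show ?thesis using LIMSEQ_unique[OF delta_conv] by simp
qed




definition cc :: complex where "cc = 2 * of_real pi * \<i>"
definition trm :: "nat \<Rightarrow> complex \<Rightarrow> int \<Rightarrow> complex" where
  "trm t \<theta> k = complex_of_real (delta k t) * exp (cc * of_int k * \<theta>)"
definition B0 :: "complex set" where "B0 = ball 0 (1/20)"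

lemma charf_trm: "charf t \<theta> = infsum (trm t \<theta>) UNIV"
  unfolding charf_def trm_def[abs_def] cc_def by simp

lemma delta1': "delta j (Suc 0) = (if j \<le> 1 then (1/2) ^ (nat (2 - j)) else 0)"
  using delta1 by simp

lemma cc_nz: "cc \<noteq> 0" by (simp add: cc_def)
lemma norm_cc: "norm cc = 2 * pi" by (simp add: cc_def norm_mult)

lemma B0_bound: assumes "\<theta> \<in> B0" shows "norm (exp (-(cc*\<theta>))) \<le> 9/5"
proof -
  have "norm \<theta> < 1/20" using assms by (simp add: B0_def)
  moreover have "pi * norm \<theta> \<le> 4 * norm \<theta>" using pi_less_4 by (intro mult_right_mono) auto
  ultimately have "norm (-(cc*\<theta>)) \<le> 2/5" by (simp add: norm_mult norm_cc)
  then show ?thesis using exp_bound_lemma[of "-(cc*\<theta>)"] by simp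
qed

lemma trm_even: "trm (2*u) \<theta> = trm u \<theta>"
  by (rule ext) (simp add: trm_def delta_even)

lemma trm_odd: "trm (Suc (2*u)) \<theta> k = (exp (cc*\<theta>)/2) * trm u \<theta> (k-1) + (exp (-(cc*\<theta>))/2) * trm (Suc u) \<theta> (k+1)"
proof -
  have a1: "cc * of_int k * \<theta> = cc*\<theta> + cc * of_int (k-1) * \<theta>"
    by (simp add: algebra_simps)
  have a: "exp (cc * of_int k * \<theta>) = exp (cc*\<theta>) * exp (cc * of_int (k-1) * \<theta>)"
    unfolding exp_add[symmetric] a1[symmetric] ..
  have b1: "cc * of_int k * \<theta> = -(cc*\<theta>) + cc * of_int (k+1) * \<theta>"
    by (simp add: algebra_simps)
  have b: "exp (cc * of_int k * \<theta>) = exp (-(cc*\<theta>)) * exp (cc * of_int (k+1) * \<theta>)"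
    unfolding exp_add[symmetric] b1[symmetric] ..
  have "trm (Suc (2*u)) \<theta> k = complex_of_real (delta (k-1) u) / 2 * exp (cc * of_int k * \<theta>)
      + complex_of_real (delta (k+1) (Suc u)) / 2 * exp (cc * of_int k * \<theta>)"
    unfolding trm_def delta_odd by (simp add: algebra_simps add_divide_distrib)
  also have "\<dots> = (exp (cc*\<theta>)/2) * trm u \<theta> (k-1) + (exp (-(cc*\<theta>))/2) * trm (Suc u) \<theta> (k+1)"
    apply (subst a) apply (subst b) by (simp add: trm_def mult_ac)
  finally show ?thesis .
qed

lemma trm0: "trm 0 \<theta> k = (if k = 0 then 1 else 0)"
  by (simp add: trm_def delta0)

lemma hs0: "(trm 0 \<theta> has_sum 1) UNIV"
proof -
  have "(trm 0 \<theta> has_sum (\<Sum>k\<in>{0}. trm 0 \<theta> k)) {0}" by (rule has_sum_finite) simp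
  then have "(trm 0 \<theta> has_sum 1) {0}" by (simp add: trm0)
  then show ?thesis by (subst has_sum_cong_neutral[where T="{0}"]) (auto simp: trm0)
qed

definition F1 :: "complex \<Rightarrow> complex" where
  "F1 \<theta> = (exp (cc*\<theta>)/2) / (1 - exp (-(cc*\<theta>))/2)"

lemma hs1: assumes "\<theta> \<in> B0" shows "(trm 1 \<theta> has_sum F1 \<theta>) UNIV"
proof -
  define E where "E = exp (cc*\<theta>)"
  define q where "q = exp (-(cc*\<theta>))/2"
  have nq: "norm q < 1" using B0_bound[OF assms] by (simp add: q_def norm_divide)
  have s1: "(\<lambda>n. (E/2) * q^n) sums ((E/2) * (1 / (1 - q)))"
    by (rule sums_mult[OF geometric_sums[OF nq]])
  have s2: "summable (\<lambda>n. norm ((E/2) * q^n))"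
    using nq by (simp add: norm_mult norm_power)
  have h1: "((\<lambda>n. (E/2) * q^n) has_sum (E/2) * (1 / (1 - q))) UNIV"
    by (rule norm_summable_imp_has_sum[OF s2 s1])
  have pt: "trm 1 \<theta> (1 - int n) = (E/2) * q^n" for n
  proof -
    have "nat (2 - (1 - int n)) = Suc n" by simp
    then have d0: "delta (1 - int n) 1 = (1/2)^(Suc n)" using delta1[of "1 - int n"] by simp
    then have d: "delta (1 - int n) (Suc 0) = (1/2)^(Suc n)" by simp
    have "exp (cc * of_int (1 - int n) * \<theta>) = E * exp (-(cc*\<theta>)) ^ n"
    proof -
      have "cc * of_int (1 - int n) * \<theta> = cc*\<theta> + of_nat n * (-(cc*\<theta>))"
        by (simp add: algebra_simps)
      then show ?thesis unfolding E_def exp_of_nat_mult[symmetric] exp_add[symmetric] by simp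
    qed
    then show ?thesis by (simp add: trm_def d q_def power_divide field_simps)
  qed
  have bij: "bij_betw (\<lambda>n::nat. 1 - int n) UNIV {k. k \<le> 1}"
    by (rule bij_betwI[where g="\<lambda>k. nat (1 - k)"]) auto
  have "(trm 1 \<theta> has_sum (E/2) * (1 / (1 - q))) {k. k \<le> 1}"
  proof -
    have pt': "(\<lambda>n. trm 1 \<theta> (1 - int n)) = (\<lambda>n. (E/2) * q^n)" using pt by (rule ext)
    have "((\<lambda>n. trm 1 \<theta> (1 - int n)) has_sum (E/2) * (1 / (1 - q))) UNIV" unfolding pt' by (rule h1)
    then show ?thesis using has_sum_reindex_bij_betw[OF bij, of "trm 1 \<theta>"] by blast
  qed
  then have "(trm 1 \<theta> has_sum (E/2) * (1 / (1 - q))) UNIV"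
    by (subst has_sum_cong_neutral[where T="{k. k \<le> 1}"]) (auto simp: trm_def delta1')
  then show ?thesis by (simp add: F1_def E_def q_def)
qed

lemma shift_hs: "((\<lambda>k. f (k + a)) has_sum S) (UNIV::int set) \<longleftrightarrow> (f has_sum S) UNIV"
proof -
  have "bij_betw (\<lambda>k. k + a) (UNIV::int set) UNIV" by (rule bij_betwI[where g="\<lambda>k. k - a"]) auto
  then show ?thesis using has_sum_reindex_bij_betw by blast
qed

lemma hs_odd:
  assumes "(trm u \<theta> has_sum S1) UNIV" "(trm (Suc u) \<theta> has_sum S2) UNIV"
  shows "(trm (Suc (2*u)) \<theta> has_sum (exp (cc*\<theta>)/2) * S1 + (exp (-(cc*\<theta>))/2) * S2) UNIV"
proof -
  have a: "((\<lambda>k. trm u \<theta> (k + -1)) has_sum S1) UNIV" using assms(1) shift_hs by blast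
  have b: "((\<lambda>k. trm (Suc u) \<theta> (k + 1)) has_sum S2) UNIV" using assms(2) shift_hs by blast
  have "((\<lambda>k. (exp (cc*\<theta>)/2) * trm u \<theta> (k + -1) + (exp (-(cc*\<theta>))/2) * trm (Suc u) \<theta> (k+1)) has_sum
      (exp (cc*\<theta>)/2) * S1 + (exp (-(cc*\<theta>))/2) * S2) UNIV"
    by (intro has_sum_add has_sum_cmult_right a b)
  moreover have "trm (Suc (2*u)) \<theta> = (\<lambda>k. (exp (cc*\<theta>)/2) * trm u \<theta> (k + -1) + (exp (-(cc*\<theta>))/2) * trm (Suc u) \<theta> (k+1))"
    by (rule ext) (simp add: trm_odd)
  ultimately show ?thesis by simp
qed

lemma summ: "\<theta> \<in> B0 \<Longrightarrow> trm t \<theta> summable_on UNIV"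
proof (induction t rule: less_induct)
  case (less t)
  show ?case
  proof (cases "t \<le> 1")
    case True
    then consider "t = 0" | "t = 1" by linarith
    then show ?thesis using hs0 hs1[OF less.prems] unfolding summable_on_def by metis
  next
    case False
    obtain u d where ud: "t = 2*u + d" "d < 2" by (metis div_mult_mod_eq mod_less_divisor zero_less_numeral mult.commute)
    have u: "u \<ge> 1" using False ud by linarith
    show ?thesis
    proof (cases "d = 0")
      case True
      then have t: "t = 2*u" using ud by simp
      have "u < t" using t u by simp
      then show ?thesis using less t trm_even by metis
    next
      case False
      then have t: "t = Suc (2*u)" using ud by simp
      have "u < t" "Suc u < t" using t u by simp_all
      then show ?thesis using less hs_odd[OF has_sum_infsum has_sum_infsum] t unfolding summable_on_def by metis
    qed
  qed
qed

lemma hs_charf: "\<theta> \<in> B0 \<Longrightarrow> (trm t \<theta> has_sum charf t \<theta>) UNIV"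
  using summ charf_trm by simp

lemma charf0: "charf 0 \<theta> = 1"
  using hs0 charf_trm infsumI by metis

lemma charf1: "\<theta> \<in> B0 \<Longrightarrow> charf 1 \<theta> = F1 \<theta>"
  using hs1 charf_trm infsumI by metis

lemma charf_even: "charf (2*u) = charf u"
  by (rule ext) (simp add: charf_trm trm_even)

lemma charf_odd: "\<theta> \<in> B0 \<Longrightarrow> charf (Suc (2*u)) \<theta> = (exp (cc*\<theta>)/2) * charf u \<theta> + (exp (-(cc*\<theta>))/2) * charf (Suc u) \<theta>"
  using has_sum_unique[OF hs_charf hs_odd[OF hs_charf hs_charf]] by blast




lemma bit_ev: "\<not> bit (2*u::nat) 0" "bit (2*u::nat) (Suc i) = bit u i"
  by (simp_all add: bit_0 bit_Suc)
lemma bit_od: "bit (Suc (2*u)::nat) 0" "bit (Suc (2*u)::nat) (Suc i) = bit u i"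
  by (simp_all add: bit_0 bit_Suc)

lemma bit_lt: "bit (n::nat) i \<Longrightarrow> i < n"
proof -
  assume "bit n i"
  then have "odd (n div 2^i)" by (simp add: bit_iff_odd)
  then have "n div 2^i \<noteq> 0" using odd_pos by fastforce
  then have "2^i \<le> n" by (simp add: div_eq_0_iff not_less) 
  moreover have "i < 2^i" by (rule less_exp)
  ultimately show "i < n" by linarith
qed

definition sh :: "nat \<times> nat \<Rightarrow> nat \<times> nat" where "sh p = (Suc (fst p), Suc (snd p))"
lemma inj_sh: "inj sh" by (auto simp: inj_def sh_def prod_eq_iff)
lemma card_sh: "card (sh ` X) = card X"
  by (rule card_image) (rule inj_on_subset[OF inj_sh subset_UNIV])

lemma ob_fin: "one_blocks t \<subseteq> {..t} \<times> {..t}"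
proof
  fix p assume "p \<in> one_blocks t"
  then obtain a b where p: "p = (a,b)" "a \<le> b" "\<forall>i\<in>{a..b}. bit t i" unfolding one_blocks_def by auto
  then have "bit t b" by auto
  then have "b < t" by (rule bit_lt)
  then show "p \<in> {..t} \<times> {..t}" using p by auto
qed

lemma iz_fin: "inner_zero_blocks t \<subseteq> {..t} \<times> {..t}"
proof
  fix p assume "p \<in> inner_zero_blocks t"
  then obtain a b where p: "p = (a,b)" "a \<le> b" "bit t (Suc b)" unfolding inner_zero_blocks_def by auto
  then have "Suc b < t" using bit_lt by blast
  then show "p \<in> {..t} \<times> {..t}" using p by auto
qed

lemma finite_ob: "finite (one_blocks t)" using ob_fin finite_subset by blast
lemma finite_iz: "finite (inner_zero_blocks t)" using iz_fin finite_subset by blast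

lemma all_Suc_iv: "(\<forall>i\<in>{Suc a..Suc b}. P i) \<longleftrightarrow> (\<forall>i\<in>{a..b}. P (Suc i))"
proof
  assume "\<forall>i\<in>{Suc a..Suc b}. P i" then show "\<forall>i\<in>{a..b}. P (Suc i)" by auto
next
  assume h: "\<forall>i\<in>{a..b}. P (Suc i)"
  show "\<forall>i\<in>{Suc a..Suc b}. P i"
  proof
    fix i assume "i \<in> {Suc a..Suc b}"
    then obtain j where "i = Suc j" "j \<in> {a..b}" by (cases i) auto
    then show "P i" using h by auto
  qed
qed

lemma ob_ev_Suc: "(Suc a, Suc b) \<in> one_blocks (2*u) \<longleftrightarrow> (a, b) \<in> one_blocks u"
  unfolding one_blocks_def by (cases a) (auto simp: all_Suc_iv bit_ev)

lemma ob_od_Suc: "(Suc a, Suc b) \<in> one_blocks (Suc (2*u)) \<longleftrightarrow> (a, b) \<in> one_blocks u \<and> a > 0"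
  unfolding one_blocks_def by (cases a) (auto simp: all_Suc_iv bit_od)

lemma ob_ev_0: "(0, b) \<notin> one_blocks (2*u)"
proof
  assume "(0, b) \<in> one_blocks (2*u)"
  then have "bit (2*u) 0" unfolding one_blocks_def by auto
  then show False using bit_ev by simp
qed

lemma ob_Suc_0: "(Suc a, 0) \<notin> one_blocks t"
  unfolding one_blocks_def by auto

lemma ob_od_0: "(0, b) \<in> one_blocks (Suc (2*u)) \<longleftrightarrow> (b = 0 \<and> \<not> bit u 0) \<or> (\<exists>b'. b = Suc b' \<and> (0, b') \<in> one_blocks u)"
proof (cases b)
  case 0
  then show ?thesis unfolding one_blocks_def by (auto simp: bit_od)
next
  case (Suc b')
  have "(\<forall>i\<in>{0..Suc b'}. bit (Suc (2*u)) i) \<longleftrightarrow> (\<forall>i\<in>{0..b'}. bit u i)"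
  proof
    assume h: "\<forall>i\<in>{0..Suc b'}. bit (Suc (2*u)) i"
    show "\<forall>i\<in>{0..b'}. bit u i"
    proof
      fix i assume "i \<in> {0..b'}" then have "Suc i \<in> {0..Suc b'}" by auto
      then show "bit u i" using h bit_od by metis
    qed
  next
    assume h: "\<forall>i\<in>{0..b'}. bit u i"
    show "\<forall>i\<in>{0..Suc b'}. bit (Suc (2*u)) i"
    proof
      fix i assume i: "i \<in> {0..Suc b'}"
      show "bit (Suc (2*u)) i"
      proof (cases i)
        case 0 then show ?thesis by (simp add: bit_od)
      next
        case (Suc j) then show ?thesis using h i bit_od by auto
      qed
    qed
  qed
  then show ?thesis unfolding one_blocks_def using Suc by (auto simp: bit_od)
qed

lemma ob_0_unique: "(0, b) \<in> one_blocks t \<Longrightarrow> (0, b') \<in> one_blocks t \<Longrightarrow> b = b'"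
proof (rule ccontr)
  assume h: "(0, b) \<in> one_blocks t" "(0, b') \<in> one_blocks t" "b \<noteq> b'"
  then consider "b < b'" | "b' < b" by linarith
  then show False
  proof cases
    case 1 then show False using h unfolding one_blocks_def by auto
  next
    case 2 then show False using h unfolding one_blocks_def by auto
  qed
qed


lemma ob_even_0: "even t \<Longrightarrow> (0, b) \<notin> one_blocks t"
proof
  assume "even t" "(0, b) \<in> one_blocks t"
  then have "bit t 0" unfolding one_blocks_def by auto
  then show False using \<open>even t\<close> by (simp add: bit_0)
qed

definition LS :: "nat \<Rightarrow> nat \<Rightarrow> (nat \<times> nat) set" where
  "LS k t = {(a, b) \<in> one_blocks t. b - a + 1 \<le> k}"

lemma Lcount_LS: "Lcount k t = card (LS k t)" by (simp add: Lcount_def LS_def)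

lemma finite_LS: "finite (LS k t)" unfolding LS_def using finite_ob by (rule finite_subset[rotated]) auto

lemma LS_ev: "LS k (2*u) = sh ` LS k u"
proof (rule set_eqI)
  fix p :: "nat \<times> nat"
  obtain a b where p: "p = (a, b)" by fastforce
  show "p \<in> LS k (2*u) \<longleftrightarrow> p \<in> sh ` LS k u"
  proof (cases a)
    case 0 then show ?thesis using ob_ev_0 by (auto simp: p LS_def sh_def)
  next
    case (Suc a')
    show ?thesis
    proof (cases b)
      case 0 then show ?thesis using ob_Suc_0 Suc by (auto simp: p LS_def sh_def)
    next
      case (Suc b')
      then show ?thesis using \<open>a = Suc a'\<close> ob_ev_Suc
        by (auto simp: p LS_def sh_def image_iff)
    qed
  qed
qed

lemma Lcount_ev: "Lcount k (2*u) = Lcount k u"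
  unfolding Lcount_LS LS_ev by (rule card_sh)

lemma LS_od: "LS k (Suc (2*u)) = sh ` {p \<in> LS k u. fst p > 0} \<union> {p \<in> LS k (Suc (2*u)). fst p = 0}"
proof (rule set_eqI)
  fix p :: "nat \<times> nat"
  obtain a b where p: "p = (a, b)" by fastforce
  show "p \<in> LS k (Suc (2*u)) \<longleftrightarrow> p \<in> sh ` {p \<in> LS k u. fst p > 0} \<union> {p \<in> LS k (Suc (2*u)). fst p = 0}"
  proof (cases a)
    case 0 then show ?thesis by (auto simp: p sh_def)
  next
    case (Suc a')
    show ?thesis
    proof (cases b)
      case 0 then show ?thesis using ob_Suc_0 Suc by (auto simp: p LS_def sh_def)
    next
      case (Suc b')
      then show ?thesis using \<open>a = Suc a'\<close> ob_od_Suc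
        by (auto simp: p LS_def sh_def image_iff)
    qed
  qed
qed

lemma card_split0: "finite X \<Longrightarrow> card X = card {p \<in> X. fst p > 0} + card {p \<in> X. fst p = (0::nat)}"
proof -
  assume f: "finite X"
  have "X = {p \<in> X. fst p > 0} \<union> {p \<in> X. fst p = 0}" by auto
  moreover have "{p \<in> X. fst p > 0} \<inter> {p \<in> X. fst p = 0} = {}" by auto
  ultimately show ?thesis using f by (metis (no_types, lifting) card_Un_disjoint finite_Un)
qed

lemma Lcount_od: "Lcount k (Suc (2*u)) + card {p \<in> LS k u. fst p = 0} = Lcount k u + card {p \<in> LS k (Suc (2*u)). fst p = 0}"
proof -
  have d: "sh ` {p \<in> LS k u. fst p > 0} \<inter> {p \<in> LS k (Suc (2*u)). fst p = 0} = {}" by (auto simp: sh_def)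
  have f1: "finite (sh ` {p \<in> LS k u. fst p > 0})" using finite_LS by auto
  have f2: "finite {p \<in> LS k (Suc (2*u)). fst p = 0}" using finite_LS by auto
  have "Lcount k (Suc (2*u)) = card (sh ` {p \<in> LS k u. fst p > 0}) + card {p \<in> LS k (Suc (2*u)). fst p = 0}"
    unfolding Lcount_LS by (subst LS_od) (rule card_Un_disjoint[OF f1 f2 d])
  also have "card (sh ` {p \<in> LS k u. fst p > 0}) = card {p \<in> LS k u. fst p > 0}"
    by (rule card_sh)
  finally show ?thesis using card_split0[OF finite_LS, of k u] unfolding Lcount_LS by linarith
qed

lemma LS0_even: assumes "even u" shows "{p \<in> LS k u. fst p = 0} = {}"
proof (rule equals0I)
  fix p assume "p \<in> {p \<in> LS k u. fst p = 0}"
  then have "p \<in> one_blocks u" "fst p = 0" by (auto simp: LS_def)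
  then have "(0, snd p) \<in> one_blocks u" by (metis prod.collapse)
  then show False using ob_even_0[OF assms] by blast
qed

lemma LS0_at: assumes h: "(0, b) \<in> one_blocks u"
  shows "{p \<in> LS k u. fst p = 0} = (if b + 1 \<le> k then {(0, b)} else {})"
proof -
  have "p \<in> {p \<in> LS k u. fst p = 0} \<longleftrightarrow> p = (0, b) \<and> b + 1 \<le> k" for p
  proof -
    obtain a c where p: "p = (a, c)" by fastforce
    show ?thesis
    proof
      assume "p \<in> {p \<in> LS k u. fst p = 0}"
      then have "(0, c) \<in> one_blocks u" "a = 0" "c + 1 \<le> k" by (auto simp: LS_def p)
      moreover then have "c = b" using ob_0_unique h by blast
      ultimately show "p = (0, b) \<and> b + 1 \<le> k" by (simp add: p)
    next
      assume "p = (0, b) \<and> b + 1 \<le> k" then show "p \<in> {p \<in> LS k u. fst p = 0}" using h by (auto simp: LS_def)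
    qed
  qed
  then show ?thesis by auto
qed

lemma Lcount_od_even: "k \<ge> 1 \<Longrightarrow> even u \<Longrightarrow> Lcount k (Suc (2*u)) = Lcount k u + 1"
proof -
  assume k: "k \<ge> 1" and u: "even u"
  have "(0, 0) \<in> one_blocks (Suc (2*u))" using ob_od_0 u by (simp add: bit_0)
  then have "{p \<in> LS k (Suc (2*u)). fst p = 0} = {(0, 0)}" using LS0_at[of 0 "Suc (2*u)" k] k by simp
  then show ?thesis using Lcount_od[of k u] LS0_even[OF u, of k] by simp
qed

lemma Lcount_od_odd: "(0, b) \<in> one_blocks u \<Longrightarrow>
   Lcount k (Suc (2*u)) + (if b + 1 \<le> k then 1 else 0) = Lcount k u + (if b + 2 \<le> k then 1 else 0)"
proof -
  assume h: "(0, b) \<in> one_blocks u"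
  have "(0, Suc b) \<in> one_blocks (Suc (2*u))" using ob_od_0 h by simp
  then have "{p \<in> LS k (Suc (2*u)). fst p = 0} = (if b + 2 \<le> k then {(0, Suc b)} else {})"
    using LS0_at[of "Suc b" "Suc (2*u)" k] by simp
  moreover have "{p \<in> LS k u. fst p = 0} = (if b + 1 \<le> k then {(0, b)} else {})" using LS0_at[OF h] .
  ultimately show ?thesis using Lcount_od[of k u] by (simp split: if_splits)
qed

definition KS :: "nat \<Rightarrow> (nat \<times> nat) set" where
  "KS t = {(a, b) \<in> inner_zero_blocks t. b - a + 1 \<ge> 2}"

lemma Kcount_KS: "Kcount t = card (KS t)" by (simp add: Kcount_def KS_def)
lemma finite_KS: "finite (KS t)" unfolding KS_def using finite_iz by (rule finite_subset[rotated]) auto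

lemma iz_0: "(0, b) \<notin> inner_zero_blocks t" by (simp add: inner_zero_blocks_def)
lemma iz_Suc_0: "(Suc a, 0) \<notin> inner_zero_blocks t" by (simp add: inner_zero_blocks_def)

lemma iz_ev_Suc: "(Suc a, Suc b) \<in> inner_zero_blocks (2*u) \<longleftrightarrow> (a, b) \<in> inner_zero_blocks u"
  unfolding inner_zero_blocks_def by (cases a) (auto simp: all_Suc_iv bit_ev)

lemma iz_od_SucSuc: "(Suc (Suc a), Suc b) \<in> inner_zero_blocks (Suc (2*u)) \<longleftrightarrow> (Suc a, b) \<in> inner_zero_blocks u"
  unfolding inner_zero_blocks_def by (auto simp: all_Suc_iv bit_od)

lemma iz_od_1: "(1, Suc b) \<in> inner_zero_blocks (Suc (2*u)) \<longleftrightarrow> (\<forall>i\<le>b. \<not> bit u i) \<and> bit u (Suc b)"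
  unfolding inner_zero_blocks_def using all_Suc_iv[of 0 b "\<lambda>i. \<not> bit (Suc (2*u)) i"]
  by (auto simp: bit_od)

lemma KS_ev: "KS (2*u) = sh ` KS u"
proof (rule set_eqI)
  fix p :: "nat \<times> nat"
  obtain a b where p: "p = (a, b)" by fastforce
  show "p \<in> KS (2*u) \<longleftrightarrow> p \<in> sh ` KS u"
  proof (cases a)
    case 0 then show ?thesis using iz_0 by (auto simp: p KS_def sh_def)
  next
    case (Suc a')
    show ?thesis
    proof (cases b)
      case 0 then show ?thesis using iz_Suc_0 iz_0 Suc by (auto simp: p KS_def sh_def)
    next
      case (Suc b')
      then show ?thesis using \<open>a = Suc a'\<close> iz_ev_Suc iz_0
        by (auto simp: p KS_def sh_def image_iff)
    qed
  qed
qed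

lemma Kcount_ev: "Kcount (2*u) = Kcount u"
  unfolding Kcount_KS KS_ev by (rule card_sh)

lemma KS_od: "KS (Suc (2*u)) = sh ` KS u \<union> {p \<in> KS (Suc (2*u)). fst p = 1}"
proof (rule set_eqI)
  fix p :: "nat \<times> nat"
  obtain a b where p: "p = (a, b)" by fastforce
  show "p \<in> KS (Suc (2*u)) \<longleftrightarrow> p \<in> sh ` KS u \<union> {p \<in> KS (Suc (2*u)). fst p = 1}"
  proof (cases a)
    case 0 then show ?thesis using iz_0 by (auto simp: p KS_def sh_def)
  next
    case (Suc a')
    show ?thesis
    proof (cases a')
      case 0 then show ?thesis using iz_0 Suc by (auto simp: p KS_def sh_def)
    next
      case (Suc a'')
      show ?thesis
      proof (cases b)
        case 0 then show ?thesis using iz_Suc_0 \<open>a = Suc a'\<close> by (auto simp: p KS_def sh_def)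
      next
        case (Suc b')
        then show ?thesis using \<open>a = Suc a'\<close> \<open>a' = Suc a''\<close> iz_od_SucSuc[of a'' b' u]
          by (auto simp: p KS_def sh_def image_iff)
      qed
    qed
  qed
qed

lemma Kcount_od: "Kcount (Suc (2*u)) = Kcount u + card {p \<in> KS (Suc (2*u)). fst p = 1}"
proof -
  have d: "sh ` KS u \<inter> {p \<in> KS (Suc (2*u)). fst p = 1} = {}"
    using iz_0 by (auto simp: sh_def KS_def)
  have f2: "finite {p \<in> KS (Suc (2*u)). fst p = 1}" using finite_KS by auto
  have "Kcount (Suc (2*u)) = card (sh ` KS u) + card {p \<in> KS (Suc (2*u)). fst p = 1}"
    unfolding Kcount_KS by (subst KS_od) (rule card_Un_disjoint[OF _ f2 d], use finite_KS in auto)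
  also have "card (sh ` KS u) = card (KS u)"
    by (rule card_sh)
  finally show ?thesis unfolding Kcount_KS .
qed

lemma KS1_none: "\<not> (\<exists>b\<ge>2. (\<forall>i<b. \<not> bit u i) \<and> bit u b) \<Longrightarrow> {p \<in> KS (Suc (2*u)). fst p = 1} = {}"
proof (rule ccontr)
  assume h: "\<not> (\<exists>b\<ge>2. (\<forall>i<b. \<not> bit u i) \<and> bit u b)" "{p \<in> KS (Suc (2*u)). fst p = 1} \<noteq> {}"
  then obtain b where b: "(1, b) \<in> KS (Suc (2*u))" by auto
  then have "b \<ge> 2" "(1, b) \<in> inner_zero_blocks (Suc (2*u))" by (auto simp: KS_def)
  then obtain b' where "b = Suc b'" "b' \<ge> 1" "(\<forall>i\<le>b'. \<not> bit u i) \<and> bit u (Suc b')"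
    using iz_od_1 by (cases b) auto
  then show False using h(1) by (metis Suc_le_mono less_Suc_eq_le one_add_one plus_1_eq_Suc)
qed

lemma KS1_one: "b \<ge> 2 \<Longrightarrow> (\<forall>i<b. \<not> bit u i) \<Longrightarrow> bit u b \<Longrightarrow> {p \<in> KS (Suc (2*u)). fst p = 1} = {(1, b)}"
proof -
  assume h: "b \<ge> 2" "\<forall>i<b. \<not> bit u i" "bit u b"
  obtain b' where b': "b = Suc b'" using h by (cases b) auto
  have "(1, b) \<in> inner_zero_blocks (Suc (2*u))" using iz_od_1[of b' u] h b' by auto
  then have m: "(1, b) \<in> KS (Suc (2*u))" using h by (auto simp: KS_def)
  have "c = b" if "(1, c) \<in> KS (Suc (2*u))" for c
  proof -
    have "(1, c) \<in> inner_zero_blocks (Suc (2*u))" "c \<ge> 1" using that by (auto simp: KS_def inner_zero_blocks_def)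
    then obtain c' where c': "c = Suc c'" "(\<forall>i\<le>c'. \<not> bit u i) \<and> bit u (Suc c')" using iz_od_1 by (cases c) auto
    show "c = b"
    proof (rule ccontr)
      assume "c \<noteq> b"
      then consider "c' < b'" | "b' < c'" using b' c' by linarith
      then show False
      proof cases
        case 1 then show False using c' h(2) b' by auto
      next
        case 2 then show False using c' h(3) b' by auto
      qed
    qed
  qed
  then have u: "\<And>c. (1, c) \<in> KS (Suc (2*u)) \<Longrightarrow> c = b" .
  show ?thesis
  proof (rule set_eqI)
    fix p :: "nat \<times> nat"
    obtain a c where p: "p = (a, c)" by fastforce
    show "p \<in> {p \<in> KS (Suc (2*u)). fst p = 1} \<longleftrightarrow> p \<in> {(1, b)}"
      using m u[of c] unfolding p by auto
  qed
qed




lemma open_B0: "open B0" by (simp add: B0_def)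
lemma zero_B0: "0 \<in> B0" by (simp add: B0_def)

lemma F1_holo: "F1 holomorphic_on B0"
proof -
  have "1 - exp (-(cc*\<theta>))/2 \<noteq> 0" if "\<theta> \<in> B0" for \<theta>
  proof
    assume "1 - exp (-(cc*\<theta>))/2 = 0"
    then have "exp (-(cc*\<theta>)) = 2" by (simp add: field_simps)
    then show False using B0_bound[OF that] by simp
  qed
  then show ?thesis unfolding F1_def by (intro holomorphic_intros) auto
qed

lemma charf_holo: "charf t holomorphic_on B0"
proof (induction t rule: less_induct)
  case (less t)
  show ?case
  proof (cases "t \<le> 1")
    case True
    then consider "t = 0" | "t = 1" by linarith
    then show ?thesis
    proof cases
      case 1 then show ?thesis by (simp add: charf0 holomorphic_on_const)
    next
      case 2 then show ?thesis using holomorphic_transform[OF F1_holo] charf1 by metis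
    qed
  next
    case False
    obtain u d where ud: "t = 2*u + d" "d < 2" by (metis div_mult_mod_eq mod_less_divisor zero_less_numeral mult.commute)
    have u: "u \<ge> 1" using False ud by linarith
    show ?thesis
    proof (cases "d = 0")
      case True
      then have t: "t = 2*u" using ud by simp
      have "u < t" using t u by simp
      then show ?thesis using less t charf_even by metis
    next
      case False
      then have t: "t = Suc (2*u)" using ud by simp
      have "u < t" "Suc u < t" using t u by simp_all
      then have h: "charf u holomorphic_on B0" "charf (Suc u) holomorphic_on B0" using less by auto
      have "(\<lambda>\<theta>. (exp (cc*\<theta>)/2) * charf u \<theta> + (exp (-(cc*\<theta>))/2) * charf (Suc u) \<theta>) holomorphic_on B0"
        by (intro holomorphic_intros h) auto
      then show ?thesis using holomorphic_transform charf_odd t by (metis (no_types, lifting))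
    qed
  qed
qed

lemma hd_exp: "(deriv ^^ n) (\<lambda>z. exp (a*z)/2) = (\<lambda>z::complex. a^n * exp (a*z)/2)"
proof (induction n)
  case 0 then show ?case by simp
next
  case (Suc n)
  have d: "deriv (\<lambda>z. a^n * exp (a*z)/2) z = a^(Suc n) * exp (a*z)/2" for z
    by (rule DERIV_imp_deriv) (auto intro!: derivative_eq_intros)
  have "(deriv ^^ Suc n) (\<lambda>z. exp (a*z)/2) = deriv (\<lambda>z. a^n * exp (a*z)/2)" using Suc.IH by simp
  also have "\<dots> = (\<lambda>z. a^(Suc n) * exp (a*z)/2)" using d by (rule ext)
  finally show ?case .
qed

lemma hd_exp': "(deriv ^^ n) (\<lambda>z. exp (-(a*z))/2) = (\<lambda>z::complex. (-a)^n * exp (-(a*z))/2)"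
  using hd_exp[of n "-a"] by simp

lemma exp_holo: "(\<lambda>z::complex. exp (a*z)/2) holomorphic_on S"
  by (intro holomorphic_intros) auto

definition gam :: "nat \<Rightarrow> nat \<Rightarrow> complex" where "gam n t = (deriv ^^ n) (charf t) 0"

lemma gam_even: "gam n (2*u) = gam n u" by (simp add: gam_def charf_even)

lemma gam_odd: "gam n (Suc (2*u)) =
  (\<Sum>i = 0..n. of_nat (n choose i) * (cc^i/2) * gam (n-i) u) +
  (\<Sum>i = 0..n. of_nat (n choose i) * ((-cc)^i/2) * gam (n-i) (Suc u))"
proof -
  let ?f = "\<lambda>\<theta>. (exp (cc*\<theta>)/2) * charf u \<theta> + (exp ((-cc)*\<theta>)/2) * charf (Suc u) \<theta>"
  have h1: "?f holomorphic_on B0" by (intro holomorphic_intros charf_holo) auto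
  have "gam n (Suc (2*u)) = (deriv ^^ n) ?f 0"
    unfolding gam_def
    by (rule higher_deriv_transform_within_open[OF charf_holo h1 open_B0 zero_B0]) (simp add: charf_odd)
  also have "\<dots> = (deriv ^^ n) (\<lambda>\<theta>. (exp (cc*\<theta>)/2) * charf u \<theta>) 0 + (deriv ^^ n) (\<lambda>\<theta>. (exp ((-cc)*\<theta>)/2) * charf (Suc u) \<theta>) 0"
    by (rule higher_deriv_add[OF _ _ open_B0 zero_B0]) (intro holomorphic_intros charf_holo; simp)+
  also have "\<dots> = (\<Sum>i = 0..n. of_nat (n choose i) * (cc^i/2) * gam (n-i) u) +
  (\<Sum>i = 0..n. of_nat (n choose i) * ((-cc)^i/2) * gam (n-i) (Suc u))"
    by (subst higher_deriv_mult[OF exp_holo charf_holo open_B0 zero_B0],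
        subst higher_deriv_mult[OF exp_holo charf_holo open_B0 zero_B0]) (simp add: hd_exp hd_exp' gam_def)
  finally show ?thesis .
qed

lemma gam_odd_explicit:
  "gam 0 (Suc (2*u)) = gam 0 u / 2 + gam 0 (Suc u) / 2"
  "gam 1 (Suc (2*u)) = (gam 1 u + cc * gam 0 u) / 2 + (gam 1 (Suc u) - cc * gam 0 (Suc u)) / 2"
  "gam 2 (Suc (2*u)) = (gam 2 u + 2*cc * gam 1 u + cc^2 * gam 0 u) / 2 + (gam 2 (Suc u) - 2*cc * gam 1 (Suc u) + cc^2 * gam 0 (Suc u)) / 2"
  "gam 3 (Suc (2*u)) = (gam 3 u + 3*cc * gam 2 u + 3*cc^2 * gam 1 u + cc^3 * gam 0 u) / 2 + (gam 3 (Suc u) - 3*cc * gam 2 (Suc u) + 3*cc^2 * gam 1 (Suc u) - cc^3 * gam 0 (Suc u)) / 2"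
  unfolding gam_odd by (simp_all add: numeral_3_eq_3 numeral_2_eq_2 field_simps)




fun mom :: "nat \<Rightarrow> real \<times> real \<times> real \<times> real" where
  "mom t = (if t = 0 then (0, 0, 2, -6) else
     (case mom (t div 2) of (a, b, a', b') \<Rightarrow>
       if even t then (a, b, 1 + (a+a')/2, (b+b')/2 + 3*(a-a')/2)
       else (1 + (a+a')/2, (b+b')/2 + 3*(a-a')/2, a', b')))"

declare mom.simps[simp del]

lemma mom0: "mom 0 = (0, 0, 2, -6)" by (simp add: mom.simps)

lemma mom_even: "u > 0 \<Longrightarrow> mom (2*u) = (case mom u of (a, b, a', b') \<Rightarrow> (a, b, 1 + (a+a')/2, (b+b')/2 + 3*(a-a')/2))"
  by (subst mom.simps) (simp split: prod.split)

lemma mom_odd: "mom (Suc (2*u)) = (case mom u of (a, b, a', b') \<Rightarrow> (1 + (a+a')/2, (b+b')/2 + 3*(a-a')/2, a', b'))"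
  by (subst mom.simps) (simp split: prod.split)

definition G :: "nat \<Rightarrow> real \<Rightarrow> real \<Rightarrow> bool" where
  "G t a b \<longleftrightarrow> gam 0 t = 1 \<and> gam 1 t = 0 \<and> gam 2 t = cc^2 * of_real a \<and> gam 3 t = cc^3 * of_real b"

lemma G_step: "G u a b \<Longrightarrow> G (Suc u) a' b' \<Longrightarrow> G (Suc (2*u)) (1 + (a+a')/2) ((b+b')/2 + 3*(a-a')/2)"
  unfolding G_def gam_odd_explicit by (simp add: field_simps power2_eq_square power3_eq_cube)

lemma hd_const: "(deriv ^^ Suc n) (\<lambda>_. c) = (\<lambda>_::complex. 0::complex)"
proof (induction n)
  case 0 then show ?case by (simp add: fun_eq_iff)
next
  case (Suc n) then show ?case by (simp add: fun_eq_iff)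
qed

lemma G0: "G 0 0 0"
proof -
  have c: "charf 0 = (\<lambda>_. 1)" using charf0 by (rule ext)
  have "gam (Suc n) 0 = 0" for n unfolding gam_def c hd_const by simp
  then show ?thesis unfolding G_def gam_def c
    by (simp add: numeral_3_eq_3 numeral_2_eq_2 del: funpow.simps)
qed

lemma G1: "G 1 2 (-6)"
proof -
  have g0: "gam 0 0 = 1" "gam 1 0 = 0" "gam 2 0 = 0" "gam 3 0 = 0" using G0 unfolding G_def by auto
  have e: "gam 0 1 = gam 0 0 / 2 + gam 0 1 / 2"
     "gam 1 1 = (gam 1 0 + cc * gam 0 0) / 2 + (gam 1 1 - cc * gam 0 1) / 2"
     "gam 2 1 = (gam 2 0 + 2*cc * gam 1 0 + cc^2 * gam 0 0) / 2 + (gam 2 1 - 2*cc * gam 1 1 + cc^2 * gam 0 1) / 2"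
     "gam 3 1 = (gam 3 0 + 3*cc * gam 2 0 + 3*cc^2 * gam 1 0 + cc^3 * gam 0 0) / 2 + (gam 3 1 - 3*cc * gam 2 1 + 3*cc^2 * gam 1 1 - cc^3 * gam 0 1) / 2"
    using gam_odd_explicit[of 0] by simp_all
  have a: "gam 0 1 = 1" using e(1) g0 by (simp add: field_simps)
  have b: "gam 1 1 = 0" using e(2) g0 a by (simp add: field_simps)
  have c: "gam 2 1 = 2*cc^2" using e(3) g0 a b by (simp add: field_simps)
  have d: "gam 3 1 = -6*cc^3" using e(4) g0 a b c by algebra
  show ?thesis unfolding G_def using a b c d by simp
qed

lemma G_mom: "case mom t of (a, b, a', b') \<Rightarrow> G t a b \<and> G (Suc t) a' b'"
proof (induction t rule: less_induct)
  case (less t)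
  show ?case
  proof (cases "t = 0")
    case True then show ?thesis using G0 G1 by (simp add: mom0)
  next
    case False
    define u where "u = t div 2"
    have ut: "u < t" using False u_def by simp
    obtain a b a' b' where m: "mom u = (a, b, a', b')" by (metis prod.exhaust)
    have IH: "G u a b" "G (Suc u) a' b'" using less[OF ut] m by auto
    show ?thesis
    proof (cases "even t")
      case True
      then have t: "t = 2*u" and u0: "u > 0" using False u_def by auto
      have "G t a b" using IH(1) unfolding G_def t gam_even .
      moreover have "G (Suc t) (1 + (a+a')/2) ((b+b')/2 + 3*(a-a')/2)" unfolding t by (rule G_step[OF IH])
      ultimately show ?thesis using mom_even[OF u0] m t by simp
    next
      case False
      then have t: "t = Suc (2*u)" using u_def by presburger
      have "G t (1 + (a+a')/2) ((b+b')/2 + 3*(a-a')/2)" unfolding t by (rule G_step[OF IH])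
      moreover have "G (Suc t) a' b'"
      proof -
        have "Suc t = 2 * Suc u" using t by simp
        then have "gam n (Suc t) = gam n (Suc u)" for n by (simp only: gam_even)
        then show ?thesis using IH(2) unfolding G_def by simp
      qed
      ultimately show ?thesis using mom_odd m t by simp
    qed
  qed
qed

lemma cumulants:
  assumes "G t a b"
  shows "cumulant 2 t = a" "cumulant 3 t = b"
proof -
  let ?g = "charf t"
  define S where "S = ?g -` {z. Re z > 0} \<inter> B0"
  have gh: "?g holomorphic_on B0" by (rule charf_holo)
  have oS: "open S" unfolding S_def
    using continuous_on_open_vimage[OF open_B0, THEN iffD1, OF holomorphic_on_imp_continuous_on[OF gh]]
      open_halfspace_Re_gt[of 0] by blast
  have g00: "?g 0 = 1" using assms unfolding G_def gam_def by simp
  have S0: "0 \<in> S" unfolding S_def using zero_B0 g00 by simp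
  have SB: "S \<subseteq> B0" unfolding S_def by auto
  have ghS: "?g holomorphic_on S" using gh SB by (rule holomorphic_on_subset)
  have nz: "\<And>z. z \<in> S \<Longrightarrow> ?g z \<notin> \<real>\<^sub>\<le>\<^sub>0" unfolding S_def by (auto simp: complex_nonpos_Reals_iff)
  define L where "L = (\<lambda>\<theta>. Ln (charf t \<theta>))"
  have LH: "L holomorphic_on S" unfolding L_def by (intro holomorphic_intros nz ghS)
  define h where "h = deriv L"
  have hH: "h holomorphic_on S" unfolding h_def by (intro holomorphic_intros LH oS)
  have dL: "h z = inverse (?g z) * deriv ?g z" if "z \<in> S" for z
  proof -
    have "(L has_field_derivative inverse (?g z) * deriv ?g z) (at z)"
      unfolding L_def
      by (rule DERIV_chain2[OF has_field_derivative_Ln[OF nz[OF that]] holomorphic_derivI[OF ghS oS that]])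
    then show ?thesis unfolding h_def by (rule DERIV_imp_deriv)
  qed
  have g_nz: "?g z \<noteq> 0" if "z \<in> S" for z using nz[OF that] by auto
  have key: "(\<Sum>i = 0..n. of_nat (n choose i) * (deriv ^^ Suc i) L 0 * gam (n-i) t) = gam (Suc n) t" for n
  proof -
    have "(deriv ^^ n) (\<lambda>z. h z * ?g z) 0 = (deriv ^^ n) (deriv ?g) 0"
      by (rule higher_deriv_transform_within_open[OF _ _ oS S0])
        (use hH ghS oS dL g_nz in \<open>auto intro!: holomorphic_intros\<close>)
    moreover have "(deriv ^^ n) (\<lambda>z. h z * ?g z) 0 = (\<Sum>i = 0..n. of_nat (n choose i) * (deriv ^^ i) h 0 * (deriv ^^ (n-i)) ?g 0)"
      by (rule higher_deriv_mult[OF hH ghS oS S0])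
    moreover have "(deriv ^^ i) h = (deriv ^^ Suc i) L" for i unfolding h_def funpow_Suc_right by simp
    moreover have "(deriv ^^ n) (deriv ?g) = (deriv ^^ Suc n) ?g" unfolding funpow_Suc_right by simp
    ultimately show ?thesis unfolding gam_def by simp
  qed
  have k0: "(deriv ^^ 1) L 0 = 0" using key[of 0] assms unfolding G_def by simp
  have k1: "(deriv ^^ 2) L 0 = cc^2 * of_real a" using key[of 1] assms k0 unfolding G_def
    by (simp add: numeral_2_eq_2)
  have k2: "(deriv ^^ 3) L 0 = cc^3 * of_real b" using key[of 2] assms k0 k1 unfolding G_def
    by (simp add: numeral_3_eq_3 numeral_2_eq_2)
  have ccd: "2 * complex_of_real pi * \<i> = cc" by (simp add: cc_def)
  show "cumulant 2 t = a" unfolding cumulant_def ccd L_def[symmetric] k1 using cc_nz by simp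
  show "cumulant 3 t = b" unfolding cumulant_def ccd L_def[symmetric] k2 using cc_nz by simp
qed

definition st :: "nat \<Rightarrow> real \<times> real \<times> real \<times> real" where
  "st t = (case mom t of (a, b, a', b') \<Rightarrow> (a - b/3, a' - b'/3, a - a', 1 + (b' - b)/6))"

lemma Dfun_st: "Dfun t = fst (st t)" "Dfun (Suc t) = fst (snd (st t))"
proof -
  obtain a b a' b' where m: "mom t = (a, b, a', b')" by (metis prod.exhaust)
  have "G t a b" "G (Suc t) a' b'" using G_mom[of t] m by auto
  then show "Dfun t = fst (st t)" "Dfun (Suc t) = fst (snd (st t))"
    unfolding Dfun_def st_def m using cumulants by auto
qed

lemma st0: "st 0 = (0, 4, -2, 0)" by (simp add: st_def mom0)

lemma st_even: "u > 0 \<Longrightarrow> st (2*u) = (case st u of (x, y, w, e) \<Rightarrow> (x, y + e, w/2 - 1, e/2 + (2+w)/4))"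
  unfolding st_def by (simp add: mom_even split: prod.split) (auto simp: field_simps)

lemma st_odd: "st (Suc (2*u)) = (case st u of (x, y, w, e) \<Rightarrow> (y + e, y, w/2 + 1, e/2 + (2-w)/4))"
  unfolding st_def by (simp add: mom_odd split: prod.split) (auto simp: field_simps)




definition Kr :: "nat \<Rightarrow> real" where "Kr t = real (Kcount t)"
definition Lr :: "nat \<Rightarrow> nat \<Rightarrow> real" where "Lr k t = real (Lcount k t)"

definition IA :: "nat \<Rightarrow> real \<Rightarrow> nat \<Rightarrow> real \<Rightarrow> real \<Rightarrow> real \<Rightarrow> real \<Rightarrow> bool" where
  "IA k c t y w e s \<longleftrightarrow> odd t \<and> (\<exists>l::nat. l \<ge> 1 \<and> (0, l - 1) \<in> one_blocks t \<and> s = (if l \<le> k then 1 else 0)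
          \<and> e \<ge> real l * (2 - w) / 2 \<and> 2 - w \<ge> 2 / 2^l)
        \<and> y \<ge> 4 + Kr t + c * (Lr k t - Kr t - s)"
definition IB :: "nat \<Rightarrow> real \<Rightarrow> nat \<Rightarrow> real \<Rightarrow> real \<Rightarrow> real \<Rightarrow> real \<Rightarrow> bool" where
  "IB k c t y w e s \<longleftrightarrow> \<not> bit t 0 \<and> bit t 1 \<and> w \<le> 0 \<and> y \<ge> 4 + Kr t + c * (Lr k t - Kr t)
          \<and> y + e \<ge> 5 + Kr t + c * (Lr k t - Kr t - s)"
definition IC :: "nat \<Rightarrow> real \<Rightarrow> nat \<Rightarrow> real \<Rightarrow> real \<Rightarrow> bool" where
  "IC k c t y w \<longleftrightarrow> \<not> bit t 0 \<and> w \<le> 0 \<and> (\<exists>b\<ge>2. (\<forall>i<b. \<not> bit t i) \<and> bit t b)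
          \<and> y \<ge> 5 + Kr t + c * (Lr k t - Kr t - 1)"

definition Inv :: "nat \<Rightarrow> real \<Rightarrow> nat \<Rightarrow> bool" where
"Inv k c t \<longleftrightarrow> (case st t of (x, y, w, e) \<Rightarrow>
   -2 < w \<and> w < 2 \<and> 0 < e \<and>
   (\<exists>s::real. (s = 0 \<or> s = 1) \<and> x \<ge> 4 + Kr t + c * (Lr k t - Kr t - s) \<and>
     (IA k c t y w e s \<or> IB k c t y w e s \<or> IC k c t y w)))"

lemma Inv_I:
  assumes "st t = (x, y, w, e)" "-2 < w" "w < 2" "0 < e" "s = 0 \<or> s = 1"
    "x \<ge> 4 + Kr t + c * (Lr k t - Kr t - s)" "IA k c t y w e s \<or> IB k c t y w e s \<or> IC k c t y w"
  shows "Inv k c t"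
  unfolding Inv_def assms(1) using assms(2-7) by blast

lemma Inv_E:
  assumes "Inv k c t" "st t = (x, y, w, e)"
  obtains s where "-2 < w" "w < 2" "0 < e" "s = 0 \<or> s = 1"
    "x \<ge> 4 + Kr t + c * (Lr k t - Kr t - s)" "IA k c t y w e s \<or> IB k c t y w e s \<or> IC k c t y w"
  using assms unfolding Inv_def by auto

lemma IA_I:
  assumes "odd t" "l \<ge> 1" "(0, l - 1) \<in> one_blocks t" "s = (if l \<le> k then 1 else 0)"
    "e \<ge> real l * (2 - w) / 2" "2 - w \<ge> 2 / 2^l" "y \<ge> 4 + Kr t + c * (Lr k t - Kr t - s)"
  shows "IA k c t y w e s"
  unfolding IA_def using assms by blast

lemma ob_zero: "one_blocks 0 = {}" by (auto simp: one_blocks_def)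
lemma iz_zero: "inner_zero_blocks 0 = {}" by (auto simp: inner_zero_blocks_def)
lemma Kcount0: "Kcount 0 = 0" by (simp add: Kcount_def iz_zero)
lemma Lcount0: "Lcount k 0 = 0" by (simp add: Lcount_def ob_zero)

lemma lin_helper: "(Q::real) = P/4 + 1/2 - w/4 \<Longrightarrow> P/2 \<le> e \<Longrightarrow> Q \<le> e/2 + (2-w)/4"
proof -
  assume "Q = P/4 + 1/2 - w/4" "P/2 \<le> e"
  moreover have "(2-w)/4 = 1/2 - w/4" by simp
  ultimately show ?thesis by linarith
qed

lemma lin1: "0 < (e::real) \<Longrightarrow> real (1::nat) * (2 - (w/2 + 1)) / 2 \<le> e/2 + (2-w)/4"
proof -
  assume e: "0 < e"
  have a: "real (1::nat) * (2 - (w/2 + 1)) / 2 = 1/2 - w/4" by simp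
  have b: "(2-w)/4 = 1/2 - w/4" by simp
  show ?thesis unfolding a b using e by simp
qed

lemma Kr_od_none: assumes "\<not> (\<exists>b\<ge>2. (\<forall>i<b. \<not> bit u i) \<and> bit u b)"
  shows "Kr (Suc (2*u)) = Kr u"
proof -
  have "Kcount (Suc (2*u)) = Kcount u + card {p \<in> KS (Suc (2*u)). fst p = 1}" by (rule Kcount_od)
  also have "{p \<in> KS (Suc (2*u)). fst p = 1} = {}" by (rule KS1_none[OF assms])
  finally show ?thesis by (simp add: Kr_def)
qed

lemma Kr_od_one: assumes "b \<ge> 2" "\<forall>i<b. \<not> bit u i" "bit u b"
  shows "Kr (Suc (2*u)) = Kr u + 1"
proof -
  have "Kcount (Suc (2*u)) = Kcount u + card {p \<in> KS (Suc (2*u)). fst p = 1}" by (rule Kcount_od)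
  also have "{p \<in> KS (Suc (2*u)). fst p = 1} = {(1, b)}" by (rule KS1_one[OF assms])
  finally show ?thesis by (simp add: Kr_def)
qed

lemma st1: "st 1 = (4, 4, 0, 1)"
  using st_odd[of 0] st0 by simp

lemma Inv1:
  assumes "k \<ge> 2"
  shows "Inv k c 1"
proof -
  have n: "\<not> (\<exists>b\<ge>2. (\<forall>i<b. \<not> bit (0::nat) i) \<and> bit (0::nat) b)" by simp
  have K: "Kr 1 = 0" using Kr_od_none[OF n] Kcount0 by (simp add: Kr_def)
  have L: "Lr k 1 = 1" using Lcount_od_even[of k 0] Lcount0 assms by (simp add: Lr_def)
  have ob: "(0, 1 - 1) \<in> one_blocks 1" using ob_od_0[where u=0 and b=0] by simp
  have "IA k c 1 4 0 1 1" by (rule IA_I[OF _ _ ob]) (use assms K L in auto)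
  moreover have "(4::real) \<ge> 4 + Kr 1 + c * (Lr k 1 - Kr 1 - 1)" using K L by simp
  ultimately show ?thesis using Inv_I[OF st1, of 1] by auto
qed

lemma bound_cl: "2 - w \<ge> 2 / 2^l \<Longrightarrow> real l / 2^l \<le> real l * (2 - w) / 2"
proof -
  assume h: "2 - w \<ge> 2 / 2^l"
  have "real l * (2 / 2^l) \<le> real l * (2 - w)" by (rule mult_left_mono[OF h]) simp
  then show ?thesis by (simp add: field_simps)
qed

lemma Inv_step:
  assumes k: "k \<ge> 2" and c0: "c \<ge> 0" and hc: "\<And>l. 1 \<le> l \<Longrightarrow> l \<le> k \<Longrightarrow> c \<le> real l / 2^l"
    and I: "Inv k c u" and u: "u \<ge> 1"
  shows "Inv k c (2*u) \<and> Inv k c (Suc (2*u))"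
proof -
  obtain x y w e where st: "st u = (x, y, w, e)" by (metis prod.exhaust)
  have st_e: "st (2*u) = (x, y + e, w/2 - 1, e/2 + (2+w)/4)" using st_even[of u] u st by simp
  have st_o: "st (Suc (2*u)) = (y + e, y, w/2 + 1, e/2 + (2-w)/4)" using st_odd[of u] st by simp
  define K where "K = Kr u"
  define L where "L = Lr k u"
  have Ke: "Kr (2*u) = K" by (simp add: K_def Kr_def Kcount_ev)
  have Le: "Lr k (2*u) = L" by (simp add: L_def Lr_def Lcount_ev)
  from Inv_E[OF I st] obtain s where w1: "-2 < w" and w2: "w < 2" and e0: "0 < e" and s01: "s = 0 \<or> s = 1"
    and hx: "x \<ge> 4 + K + c * (L - K - s)" and cases: "IA k c u y w e s \<or> IB k c u y w e s \<or> IC k c u y w"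
    unfolding K_def L_def by blast
  have cs: "c * s \<le> c" using s01 c0 by auto
  have c1: "c \<le> 1" using hc[of 1] k by simp
  have ce1: "-2 < w/2 - 1" using w1 w2 by linarith
  have ce2: "w/2 - 1 < 2" using w1 w2 by linarith
  have ce3: "0 < e/2 + (2+w)/4"
  proof -
    have "e/2 + (2+w)/4 = e/2 + 1/2 + w/4" by (simp add: add_divide_distrib)
    then show ?thesis using w1 e0 by linarith
  qed
  have co1: "-2 < w/2 + 1" using w1 w2 by linarith
  have co2: "w/2 + 1 < 2" using w1 w2 by linarith
  have co3: "0 < e/2 + (2-w)/4"
  proof -
    have "e/2 + (2-w)/4 = e/2 + 1/2 - w/4" by (simp add: diff_divide_distrib)
    then show ?thesis using w2 e0 by linarith
  qed
  have wn: "w/2 - 1 \<le> 0" using w2 by linarith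
  note ce = ce1 ce2 ce3
  note co = co1 co2 co3
  have hx': "x \<ge> 4 + Kr (2*u) + c * (Lr k (2*u) - Kr (2*u) - s)" using hx Ke Le by simp
  from cases consider
      (A) l where "odd u" "l \<ge> 1" "(0, l - 1) \<in> one_blocks u" "s = (if l \<le> k then 1 else 0)"
          "e \<ge> real l * (2 - w) / 2" "2 - w \<ge> 2 / 2^l" "y \<ge> 4 + K + c * (L - K - s)"
    | (B) "\<not> bit u 0" "bit u 1" "w \<le> 0" "y \<ge> 4 + K + c * (L - K)" "y + e \<ge> 5 + K + c * (L - K - s)"
    | (C) b where "\<not> bit u 0" "w \<le> 0" "b \<ge> 2" "\<forall>i<b. \<not> bit u i" "bit u b" "y \<ge> 5 + K + c * (L - K - 1)"
    unfolding IA_def IB_def IC_def K_def L_def by blast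
  then show ?thesis
  proof cases
    case A
    have lw: "real l * (2 - w) \<ge> 1 * (2 - w)" using A w2 by (intro mult_right_mono) auto
    have ecs: "e \<ge> c * s"
    proof (cases "l \<le> k")
      case True
      then have "c \<le> real l / 2^l" using hc A by simp
      also have "\<dots> \<le> real l * (2 - w) / 2" using bound_cl A by simp
      finally show ?thesis using A True by simp
    next
      case False then show ?thesis using A e0 by simp
    qed
    have I0: "Inv k c (2*u)"
    proof -
      have b0: "\<not> bit (2*u) 0" "bit (2*u) 1" using bit_ev[of u] A by (simp_all add: bit_0)
      have y1: "y + e \<ge> 4 + K + c * (L - K)" using A ecs by (simp add: algebra_simps)
      have e2: "2 * e \<ge> 2 - w"
      proof -
        define P where "P = real l * (2 - w)"
        have "P/2 \<le> e" "2 - w \<le> P" using A(5) lw by (simp_all add: P_def)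
        then show ?thesis by linarith
      qed
      have eq: "y + e + (e/2 + (2+w)/4) = y + (3/2)*e + 1/2 + w/4" by (simp add: field_simps)
      have y2: "y + e + (e/2 + (2+w)/4) \<ge> 5 + K + c * (L - K - s)" unfolding eq using A(7) e2 w2 by linarith
      have "IB k c (2*u) (y + e) (w/2 - 1) (e/2 + (2+w)/4) s"
        unfolding IB_def Ke Le using b0 y1 y2 wn by simp
      then show ?thesis using Inv_I[OF st_e ce s01 hx'] by blast
    qed
    have I1: "Inv k c (Suc (2*u))"
    proof -
      have K1: "Kr (Suc (2*u)) = K"
      proof -
        have b0: "bit u 0" using A(1) by (simp add: bit_0)
        have "\<not> (\<exists>b\<ge>2. (\<forall>i<b. \<not> bit u i) \<and> bit u b)"
        proof
          assume "\<exists>b\<ge>2. (\<forall>i<b. \<not> bit u i) \<and> bit u b"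
          then obtain b where "b \<ge> 2" "\<forall>i<b. \<not> bit u i" by blast
          then have "\<not> bit u 0" by simp
          with b0 show False by simp
        qed
        then show ?thesis using Kr_od_none by (simp add: K_def)
      qed
      have L1: "Lr k (Suc (2*u)) + (if l \<le> k then 1 else 0) = L + (if l + 1 \<le> k then 1 else 0)"
      proof -
        have "l - 1 + 1 = l" "l - 1 + 2 = l + 1" using A(2) by auto
        then show ?thesis using Lcount_od_odd[OF A(3), of k] by (simp add: L_def Lr_def split: if_splits)
      qed
      define s' :: real where "s' = (if Suc l \<le> k then 1 else 0)"
      have q: "Lr k (Suc (2*u)) - K - s' = L - K - s" using L1 A(4) by (simp add: s'_def split: if_splits)
      have ob: "(0, Suc l - 1) \<in> one_blocks (Suc (2*u))"
      proof -
        have "l = Suc (l - 1)" using A(2) by simp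
        then show ?thesis using ob_od_0[where u=u and b=l] A(3) by auto
      qed
      have e1: "e/2 + (2-w)/4 \<ge> real (Suc l) * (2 - (w/2 + 1)) / 2"
      proof -
        have h1: "2 - (w/2 + 1) = (2 - w)/2" by simp
        define P where "P = real l * (2 - w)"
        have "real (Suc l) * (2 - (w/2 + 1)) / 2 = P/4 + 1/2 - w/4" unfolding h1 P_def
          by (simp add: field_simps)
        moreover have "P / 2 \<le> e" using A(5) by (simp add: P_def)
        ultimately show ?thesis by (rule lin_helper)
      qed
      have w1': "2 - (w/2 + 1) \<ge> 2 / 2^(Suc l)" using A by simp
      have y1: "y \<ge> 4 + Kr (Suc (2*u)) + c * (Lr k (Suc (2*u)) - Kr (Suc (2*u)) - s')"
        unfolding K1 q using A(7) .
      have x1: "y + e \<ge> 4 + Kr (Suc (2*u)) + c * (Lr k (Suc (2*u)) - Kr (Suc (2*u)) - s')" using y1 e0 by simp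
      have od: "odd (Suc (2*u))" by simp
      have "IA k c (Suc (2*u)) y (w/2 + 1) (e/2 + (2-w)/4) s'"
        by (rule IA_I[OF od _ ob _ e1 w1' y1]) (auto simp: s'_def)
      moreover have "s' = 0 \<or> s' = 1" by (simp add: s'_def)
      ultimately show ?thesis using Inv_I[OF st_o co _ x1] by blast
    qed
    show ?thesis using I0 I1 by blast
  next
    case B
    have I0: "Inv k c (2*u)"
    proof -
      have b0: "\<not> bit (2*u) 0" "\<forall>i<2. \<not> bit (2*u) i" "bit (2*u) 2"
      proof -
        show "\<not> bit (2*u) 0" using bit_ev by simp
        show "\<forall>i<2. \<not> bit (2*u) i"
        proof (intro allI impI)
          fix i :: nat assume "i < 2"
          then consider "i = 0" | "i = 1" by linarith
          then show "\<not> bit (2*u) i" using bit_ev[of u] B by cases auto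
        qed
        show "bit (2*u) 2" using bit_ev(2)[of u 1] B by (simp add: numeral_2_eq_2)
      qed
      have y1: "y + e \<ge> 5 + K + c * (L - K - 1)" using B cs by (simp add: algebra_simps)
      have "IC k c (2*u) (y + e) (w/2 - 1)" unfolding IC_def Ke Le using b0 y1 wn by blast
      then show ?thesis using Inv_I[OF st_e ce s01 hx'] by blast
    qed
    have I1: "Inv k c (Suc (2*u))"
    proof -
      have ev: "even u" using B by (simp add: bit_0)
      have K1: "Kr (Suc (2*u)) = K"
      proof -
        have "\<not> (\<exists>b\<ge>2. (\<forall>i<b. \<not> bit u i) \<and> bit u b)" using B by auto
        then show ?thesis using Kr_od_none by (simp add: K_def)
      qed
      have L1: "Lr k (Suc (2*u)) = L + 1" using Lcount_od_even[of k u] k ev by (simp add: L_def Lr_def)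
      have ob: "(0, 1 - 1) \<in> one_blocks (Suc (2*u))" using ob_od_0[where u=u and b=0] B by simp
      have e1: "e/2 + (2-w)/4 \<ge> real (1::nat) * (2 - (w/2 + 1)) / 2" using e0 by (rule lin1)
      have w1': "2 - (w/2 + 1) \<ge> 2 / 2^1" using B by simp
      have y1: "y \<ge> 4 + Kr (Suc (2*u)) + c * (Lr k (Suc (2*u)) - Kr (Suc (2*u)) - 1)" using L1 K1 B by simp
      have x1: "y + e \<ge> 4 + Kr (Suc (2*u)) + c * (Lr k (Suc (2*u)) - Kr (Suc (2*u)) - 1)" using y1 e0 by simp
      have od: "odd (Suc (2*u))" by simp
      have "IA k c (Suc (2*u)) y (w/2 + 1) (e/2 + (2-w)/4) 1"
        by (rule IA_I[OF od _ ob _ e1 w1' y1]) (use k in auto)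
      then show ?thesis using Inv_I[OF st_o co _ x1] by blast
    qed
    show ?thesis using I0 I1 by blast
  next
    case C
    have I0: "Inv k c (2*u)"
    proof -
      have b0: "\<not> bit (2*u) 0" "\<forall>i<Suc b. \<not> bit (2*u) i" "bit (2*u) (Suc b)"
      proof -
        show "\<not> bit (2*u) 0" using bit_ev by simp
        show "\<forall>i<Suc b. \<not> bit (2*u) i"
        proof (intro allI impI)
          fix i :: nat assume "i < Suc b"
          then show "\<not> bit (2*u) i" using bit_ev[of u] C by (cases i) auto
        qed
        show "bit (2*u) (Suc b)" using bit_ev(2)[of u b] C by simp
      qed
      have y1: "y + e \<ge> 5 + K + c * (L - K - 1)" using C e0 by simp
      have sb: "Suc b \<ge> 2" using C by simp
      have "IC k c (2*u) (y + e) (w/2 - 1)" unfolding IC_def Ke Le using b0 y1 wn sb by blast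
      then show ?thesis using Inv_I[OF st_e ce s01 hx'] by blast
    qed
    have I1: "Inv k c (Suc (2*u))"
    proof -
      have ev: "even u" using C by (simp add: bit_0)
      have K1: "Kr (Suc (2*u)) = K + 1"
        using Kr_od_one[OF C(3,4,5)] by (simp add: K_def)
      have L1: "Lr k (Suc (2*u)) = L + 1" using Lcount_od_even[of k u] k ev by (simp add: L_def Lr_def)
      have ob: "(0, 1 - 1) \<in> one_blocks (Suc (2*u))" using ob_od_0[where u=u and b=0] C by simp
      have e1: "e/2 + (2-w)/4 \<ge> real (1::nat) * (2 - (w/2 + 1)) / 2" using e0 by (rule lin1)
      have w1': "2 - (w/2 + 1) \<ge> 2 / 2^1" using C by simp
      have y1: "y \<ge> 4 + Kr (Suc (2*u)) + c * (Lr k (Suc (2*u)) - Kr (Suc (2*u)) - 1)" using L1 K1 C by simp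
      have x1: "y + e \<ge> 4 + Kr (Suc (2*u)) + c * (Lr k (Suc (2*u)) - Kr (Suc (2*u)) - 1)" using y1 e0 by simp
      have od: "odd (Suc (2*u))" by simp
      have "IA k c (Suc (2*u)) y (w/2 + 1) (e/2 + (2-w)/4) 1"
        by (rule IA_I[OF od _ ob _ e1 w1' y1]) (use k in auto)
      then show ?thesis using Inv_I[OF st_o co _ x1] by blast
    qed
    show ?thesis using I0 I1 by blast
  qed
qed

lemma Inv_all:
  assumes k: "k \<ge> 2" and c0: "c \<ge> 0" and hc: "\<And>l. 1 \<le> l \<Longrightarrow> l \<le> k \<Longrightarrow> c \<le> real l / 2^l"
  shows "t \<ge> 1 \<Longrightarrow> Inv k c t"
proof (induction t rule: less_induct)
  case (less t)
  show ?case
  proof (cases "t = 1")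
    case True then show ?thesis using Inv1[OF k] by simp
  next
    case False
    define u where "u = t div 2"
    have u1: "u \<ge> 1" "u < t" using False less.prems u_def by auto
    have IU: "Inv k c u" using less.IH[OF u1(2) u1(1)] .
    have "t = 2*u \<or> t = Suc (2*u)" using u_def by presburger
    then show ?thesis using Inv_step[OF k c0 hc IU u1(1)] by auto
  qed
qed

lemma Inv_bound:
  assumes I: "Inv k c t" and c0: "c \<ge> 0" and c1: "c \<le> 1"
  shows "\<exists>s::real. (s = 0 \<or> s = 1) \<and> mfun t \<ge> 4 + Kr t + c * (Lr k t - Kr t - s)"
proof -
  obtain x y w e where st: "st t = (x, y, w, e)" by (metis prod.exhaust)
  have mf: "mfun t = min x y" unfolding mfun_def using Dfun_st[of t] st by simp
  from Inv_E[OF I st] obtain s where s01: "s = 0 \<or> s = 1"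
    and hx: "x \<ge> 4 + Kr t + c * (Lr k t - Kr t - s)" and cases: "IA k c t y w e s \<or> IB k c t y w e s \<or> IC k c t y w"
    by blast
  have ex: "c * (Lr k t - Kr t - s) = c * (Lr k t - Kr t) - c * s" by (simp add: algebra_simps)
  have ex1: "c * (Lr k t - Kr t - 1) = c * (Lr k t - Kr t) - c" by (simp add: algebra_simps)
  have cs0: "c * s \<ge> 0" "c * s \<le> c" using s01 c0 by auto
  have hy: "y \<ge> 4 + Kr t + c * (Lr k t - Kr t - s)"
    using cases
  proof (elim disjE)
    assume "IA k c t y w e s" then show ?thesis by (simp add: IA_def)
  next
    assume "IB k c t y w e s"
    then have "y \<ge> 4 + Kr t + c * (Lr k t - Kr t)" by (simp add: IB_def)
    then show ?thesis unfolding ex using cs0 by linarith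
  next
    assume "IC k c t y w"
    then have "y \<ge> 5 + Kr t + c * (Lr k t - Kr t - 1)" by (simp add: IC_def)
    then show ?thesis unfolding ex using ex1 cs0 c1 by linarith
  qed
  show ?thesis using hx hy s01 mf by auto
qed

lemma ratio_mono: assumes "1 \<le> l" "l \<le> k" shows "real k / 2^k \<le> real l / 2^l"
  using assms(2)
proof (induction k rule: dec_induct)
  case base then show ?case by simp
next
  case (step n)
  have n1: "n \<ge> 1" using step assms(1) by simp
  have "real (Suc n) / 2^(Suc n) \<le> (2 * real n) / 2^(Suc n)"
    using n1 by (intro divide_right_mono) auto
  also have "\<dots> = real n / 2^n" by simp
  finally show ?case using step by linarith
qed

lemma main1:
  fixes k t :: nat
  assumes k: "k \<ge> 2" and t: "t \<ge> 1"
  shows "mfun t \<ge> 4 + real (Kcount t)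
           + real_of_int (max 0 \<lfloor>(real (Lcount k t) - 2 * real (Kcount t) - 1) / 2\<rfloor>)
             * (real k / 2 ^ k)"
proof -
  define K where "K = real (Kcount t)"
  define L where "L = real (Lcount k t)"
  define c :: real where "c = real k / 2^k"
  have c0: "c \<ge> 0" by (simp add: c_def)
  have hc: "c \<le> real l / 2^l" if "1 \<le> l" "l \<le> k" for l using ratio_mono[OF that] by (simp add: c_def)
  have c1: "c \<le> 1" using hc[of 1] k by simp
  obtain s :: real where s01: "s = 0 \<or> s = 1" and m1: "mfun t \<ge> 4 + K + c * (L - K - s)"
    using Inv_bound[OF Inv_all[OF k c0 hc t] c0 c1] unfolding Kr_def Lr_def K_def L_def by blast
  obtain s0 :: real where m0: "mfun t \<ge> 4 + K + 0 * (L - K - s0)"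
    using Inv_bound[OF Inv_all[OF k _ _ t], of 0] unfolding Kr_def Lr_def K_def L_def by auto
  define F where "F = \<lfloor>(L - 2 * K - 1) / 2\<rfloor>"
  show ?thesis
  proof (cases "F \<le> 0")
    case True
    then have "max 0 F = 0" by simp
    then show ?thesis using m0 unfolding K_def[symmetric] L_def[symmetric] F_def[symmetric] by simp
  next
    case False
    then have F1: "F \<ge> 1" by simp
    have "real_of_int F \<le> (L - 2 * K - 1) / 2" unfolding F_def by (rule of_int_floor_le)
    then have Fb: "real_of_int F \<le> L - K - s"
      using F1 s01 K_def by (auto simp: field_simps)
    have "c * real_of_int F \<le> c * (L - K - s)" by (rule mult_left_mono[OF Fb c0])
    moreover have "max 0 F = F" using F1 by simp
    ultimately show ?thesis using m1 unfolding K_def[symmetric] L_def[symmetric] F_def[symmetric] c_def[symmetric]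
      by (simp add: mult.commute)
  qed
qed

theorem corollary2p13:
  fixes k t :: nat
  assumes "k \<ge> 2" and "t \<ge> 1"
  shows "(mfun t \<ge> 4 + real (Kcount t)
           + real_of_int (max 0 \<lfloor>(real (Lcount k t) - 2 * real (Kcount t) - 1) / 2\<rfloor>)
             * (real k / 2 ^ k))
    \<and> (\<forall>D0::int. \<forall>k'::nat. D0 \<ge> 2 \<and> k' \<ge> 2 \<longrightarrow>
           (\<exists>B::nat. \<forall>t'::nat. t' \<ge> 1 \<and> Dfun t' \<le> real_of_int D0 \<longrightarrow>
              Kcount t' \<le> B \<and> Lcount k' t' \<le> B))"
proof
  show "mfun t \<ge> 4 + real (Kcount t)
           + real_of_int (max 0 \<lfloor>(real (Lcount k t) - 2 * real (Kcount t) - 1) / 2\<rfloor>)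
             * (real k / 2 ^ k)" by (rule main1[OF assms])
next
  show "\<forall>D0::int. \<forall>k'::nat. D0 \<ge> 2 \<and> k' \<ge> 2 \<longrightarrow>
           (\<exists>B::nat. \<forall>t'::nat. t' \<ge> 1 \<and> Dfun t' \<le> real_of_int D0 \<longrightarrow>
              Kcount t' \<le> B \<and> Lcount k' t' \<le> B)"
  proof (intro allI impI)
    fix D0 :: int and k' :: nat
    assume h: "D0 \<ge> 2 \<and> k' \<ge> 2"
    define Bv :: int where "Bv = 2*D0 + 3 + 2*D0*2^k'"
    have Bv0: "Bv \<ge> 0" using h by (simp add: Bv_def)
    show "\<exists>B::nat. \<forall>t'::nat. t' \<ge> 1 \<and> Dfun t' \<le> real_of_int D0 \<longrightarrow> Kcount t' \<le> B \<and> Lcount k' t' \<le> B"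
    proof (rule exI[of _ "nat Bv"], intro allI impI)
      fix t' :: nat
      assume ht: "t' \<ge> 1 \<and> Dfun t' \<le> real_of_int D0"
      define K where "K = real (Kcount t')"
      define L where "L = real (Lcount k' t')"
      define F where "F = \<lfloor>(L - 2 * K - 1) / 2\<rfloor>"
      define c :: real where "c = real k' / 2^k'"
      define M where "M = real_of_int (max 0 F)"
      have c0: "c > 0" using h by (simp add: c_def)
      have M0: "M \<ge> 0" by (simp add: M_def)
      have m: "mfun t' \<ge> 4 + K + M * c"
        using main1[of k' t'] h ht unfolding K_def L_def F_def c_def M_def by simp
      have "mfun t' \<le> Dfun t'" by (simp add: mfun_def)
      then have tot: "4 + K + M * c \<le> real_of_int D0" using m ht by linarith
      have Mc0: "M * c \<ge> 0" using M0 c0 by simp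
      have Kb: "K \<le> real_of_int D0" using tot Mc0 by linarith
      have "M * c \<le> real_of_int D0" using tot K_def by simp
      then have "M \<le> real_of_int D0 / c" using c0 by (simp add: pos_le_divide_eq)
      also have "real_of_int D0 / c = (real_of_int D0 * 2^k') / real k'" using h by (simp add: c_def)
      also have "\<dots> \<le> real_of_int D0 * 2^k'"
      proof -
        have P0: "real_of_int D0 * 2^k' \<ge> 0" using h by simp
        have "real_of_int D0 * 2^k' * 1 \<le> real_of_int D0 * 2^k' * real k'"
          by (rule mult_left_mono[OF _ P0]) (use h in simp)
        then show ?thesis using h by (simp add: pos_divide_le_eq)
      qed
      finally have Mb: "M \<le> real_of_int D0 * 2^k'" .
      have FM: "real_of_int F \<le> M" by (simp add: M_def)
      have "(L - 2 * K - 1) / 2 < real_of_int F + 1" unfolding F_def by (rule real_of_int_floor_add_one_gt)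
      then have Lb: "L < 2 * K + 3 + 2 * real_of_int F" by (simp add: field_simps)
      have RB: "real (nat Bv) = 2 * real_of_int D0 + 3 + 2 * real_of_int D0 * 2^k'"
        using Bv0 by (simp add: Bv_def)
      have P0: "real_of_int D0 * 2^k' \<ge> 0" using h by simp
      have D2: "real_of_int D0 \<ge> 2" using h by simp
      have "K \<le> real (nat Bv)" unfolding RB using Kb P0 D2 by linarith
      moreover have "L \<le> real (nat Bv)" unfolding RB using Lb Kb FM Mb by linarith
      ultimately show "Kcount t' \<le> nat Bv \<and> Lcount k' t' \<le> nat Bv" unfolding K_def L_def by linarith
    qed
  qed
qed


end
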